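(* Let $\mathfrak{H}$ be a Euclidean space and let $(\mathcal{X},\mathsf{S},\gamma,(\Lambda_{a})_{a\in\mathcal{A}})$ be a spectral decomposition system for $\mathfrak{H}$ such that the set $\{\Lambda_a\}_{a\in\mathcal{A}}$ is closed in $\mathscr{L}(\mathcal{X},\mathfrak{H})$. Let $\varphi\colon\mathcal{X}\to(-\infty,+\infty]$ be proper and $\mathsf{S}$-invariant, let $\Psi\colon\mathfrak{H}\to\mathbb{R}$ be Fréchet differentiable, and let $X\in\mathfrak{H}$ be such that $\gamma(X)\in\operatorname{dom}\varphi$. Suppose that $X$ is a local minimizer of $\varphi\circ\gamma+\Psi$. Then there exist $y\in\partial_{\mathsf{F}}\varphi(\gamma(X))$ and $a\in\mathcal{A}_X$ such that $-\nabla\Psi(X)=\Lambda_a y$.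
   Context: A Euclidean space is a finite-dimensional real Hilbert space; $\mathscr{L}(\mathcal{X},\mathfrak{H})$ carries the operator-norm topology. A spectral decomposition system for a Euclidean space $\mathfrak{H}$ is a tuple $(\mathcal{X},\mathsf{S},\gamma,(\Lambda_a)_{a\in\mathcal{A}})$ where $\mathcal{X}$ is a Euclidean space, $\mathsf{S}$ is a group acting on $\mathcal{X}$ such that each map $x\mapsto \mathsf{s}\cdot x$ is a linear isometry, $\gamma\colon\mathfrak{H}\to\mathcal{X}$ is a mapping, and each $\Lambda_a\colon\mathcal{X}\to\mathfrak{H}$ is a linear isometry, such that: [A] there exists a mapping $\tau\colon\mathcal{X}\to\mathcal{X}$ with $\tau(\mathsf{s}\cdot x)=\tau(x)$ for all $\mathsf{s},x$, $\tau(x)\in\mathsf{S}\cdot x$ for all $x$, and $\gamma\circ\Lambda_a=\tau$ for all $a\in\mathcal{A}$; [B] for every $X\in\mathfrak{H}$ there exists $a\in\mathcal{A}$ with $X=\Lambda_a\gamma(X)$; [C] $\langle X,Y\rangle\le\langle\gamma(X),\gamma(Y)\rangle$ for all $X,Y\in\mathfrak{H}$. $\mathcal{A}_X=\{a\in\mathcal{A}:X=\Lambda_a\gamma(X)\}$. A function $\varphi$ on $\mathcal{X}$ is $\mathsf{S}$-invariant if $\varphi(\mathsf{s}\cdot x)=\varphi(x)$ for all $\mathsf{s},x$; $\operatorname{dom}\varphi=\{x:\varphi(x)<+\infty\}$. The Fréchet subdifferential of $f$ at $x$ with $f(x)\in\mathbb{R}$ is $\partial_{\mathsf{F}}f(x)=\{y:\liminf_{z\to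 x,z\ne x}(f(z)-f(x)-\langle z-x,y\rangle)/\|z-x\|\ge0\}$. *)

theory Defs
  imports "HOL-Analysis.Analysis" "HOL-Algebra.Group_Action"
begin

definition lin_isometry :: "('a::real_normed_vector \<Rightarrow> 'b::real_normed_vector) \<Rightarrow> bool" where
  "lin_isometry f \<longleftrightarrow> linear f \<and> (\<forall>x. norm (f x) = norm x)"

text \<open>Spectral decomposition system (X, S, gam, (Lam a)_{a in A}) for H.
  The group S is a HOL-Algebra group G acting on the whole space X via act,
  each act s being a linear isometry.\<close>
definition spectral_decomposition_system ::
  "('s, 'm) monoid_scheme \<Rightarrow> ('s \<Rightarrow> 'x::euclidean_space \<Rightarrow> 'x) \<Rightarrow>
   ('h::euclidean_space \<Rightarrow> 'x) \<Rightarrow> 'a set \<Rightarrow> ('a \<Rightarrow> 'x \<Rightarrow> 'h) \<Rightarrow> bool" where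
  "spectral_decomposition_system G act gam A Lam \<longleftrightarrow>
     group_action G UNIV act \<and>
     (\<forall>s\<in>carrier G. lin_isometry (act s)) \<and>
     (\<forall>a\<in>A. lin_isometry (Lam a)) \<and>
     (\<exists>tau. (\<forall>s\<in>carrier G. \<forall>x. tau (act s x) = tau x) \<and>
            (\<forall>x. tau x \<in> {act s x | s. s \<in> carrier G}) \<and>
            (\<forall>a\<in>A. \<forall>x. gam (Lam a x) = tau x)) \<and>
     (\<forall>X. \<exists>a\<in>A. X = Lam a (gam X)) \<and>
     (\<forall>X Y. inner X Y \<le> inner (gam X) (gam Y))"

definition A_of :: "'a set \<Rightarrow> ('a \<Rightarrow> 'x \<Rightarrow> 'h) \<Rightarrow> ('h \<Rightarrow> 'x) \<Rightarrow> 'h \<Rightarrow> 'a set" where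
  "A_of A Lam gam X = {a \<in> A. X = Lam a (gam X)}"

definition S_invariant :: "('s, 'm) monoid_scheme \<Rightarrow> ('s \<Rightarrow> 'x \<Rightarrow> 'x) \<Rightarrow> ('x \<Rightarrow> 'b) \<Rightarrow> bool" where
  "S_invariant G act f \<longleftrightarrow> (\<forall>s\<in>carrier G. \<forall>x. f (act s x) = f x)"

definition edom :: "('x \<Rightarrow> ereal) \<Rightarrow> 'x set" where
  "edom f = {x. f x < \<infinity>}"

definition proper_fun :: "('x \<Rightarrow> ereal) \<Rightarrow> bool" where
  "proper_fun f \<longleftrightarrow> (\<forall>x. f x \<noteq> -\<infinity>) \<and> edom f \<noteq> {}"

text \<open>Frechet subdifferential (defined when f x is real; empty otherwise).\<close>
definition frechet_subdiff :: "('x::real_inner \<Rightarrow> ereal) \<Rightarrow> 'x \<Rightarrow> 'x set" where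
  "frechet_subdiff f x = {y. \<bar>f x\<bar> \<noteq> \<infinity> \<and>
     Liminf (at x) (\<lambda>z. (f z - f x - ereal (inner (z - x) y)) / ereal (norm (z - x))) \<ge> 0}"

definition local_minimizer :: "('x::metric_space \<Rightarrow> ereal) \<Rightarrow> 'x \<Rightarrow> bool" where
  "local_minimizer f x \<longleftrightarrow> (\<exists>e>0. \<forall>z. dist z x < e \<longrightarrow> f x \<le> f z)"

end

theory Submission
  imports Defs
begin

lemma isom_inner:
  assumes "lin_isometry f" shows "inner (f u) (f v) = inner u v"
proof -
  have l: "linear f" and n: "\<And>x. norm (f x) = norm x" using assms unfolding lin_isometry_def by auto
  have "f (u+v) = f u + f v" using l by (simp add: linear_add)
  then show ?thesis using n[of "u+v"] n[of u] n[of v] by (simp add: dot_norm[of "f u"] dot_norm[of u])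
qed

lemma nsq_diff: "(norm (a - b))^2 = (norm a)^2 + (norm (b::'v::real_inner))^2 - 2 * inner a b"
  by (simp add: power2_norm_eq_inner inner_diff_left inner_diff_right inner_commute[of b a])

theorem corollary4p4:
  fixes G :: "('s, 'm) monoid_scheme"
    and act :: "'s \<Rightarrow> 'x::euclidean_space \<Rightarrow> 'x"
    and gam :: "'h::euclidean_space \<Rightarrow> 'x"
    and A :: "'a set"
    and Lam :: "'a \<Rightarrow> 'x \<Rightarrow> 'h"
    and phi :: "'x \<Rightarrow> ereal"
    and Psi :: "'h \<Rightarrow> real"
    and X :: 'h
  assumes sds: "spectral_decomposition_system G act gam A Lam"
    and closedLam: "closed ((\<lambda>a. Blinfun (Lam a)) ` A)"
    and proper: "proper_fun phi"
    and inv: "S_invariant G act phi"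
    and diff: "\<forall>Z. Psi differentiable (at Z)"
    and dom: "gam X \<in> edom phi"
    and locmin: "local_minimizer (\<lambda>Z. phi (gam Z) + ereal (Psi Z)) X"
  shows "\<exists>y a. y \<in> frechet_subdiff phi (gam X) \<and> a \<in> A_of A Lam gam X \<and>
           (GDERIV Psi X :> - Lam a y)"
proof -
  from sds have LamI: "\<forall>a\<in>A. lin_isometry (Lam a)"
    and tau: "\<exists>tau. (\<forall>s\<in>carrier G. \<forall>x. tau (act s x) = tau x) \<and>
            (\<forall>x. tau x \<in> {act s x | s. s \<in> carrier G}) \<and>
            (\<forall>a\<in>A. \<forall>x. gam (Lam a x) = tau x)"
    and dec: "\<forall>Z. \<exists>a\<in>A. Z = Lam a (gam Z)"
    and ineq: "\<forall>Z W. inner Z W \<le> inner (gam Z) (gam W)"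
    unfolding spectral_decomposition_system_def by blast+
  have phiLam: "phi (gam (Lam a z)) = phi z" if "a \<in> A" for a z
  proof -
    obtain tau where t: "\<forall>x. tau x \<in> {act s x | s. s \<in> carrier G}" "\<forall>a\<in>A. \<forall>x. gam (Lam a x) = tau x"
      using tau by blast
    obtain s where s: "s \<in> carrier G" "tau z = act s z" using t(1) by blast
    show ?thesis using t(2) that s inv unfolding S_invariant_def by auto
  qed
  have lin: "linear (Lam a)" if "a \<in> A" for a using LamI that unfolding lin_isometry_def by auto
  have nLam: "norm (Lam a u) = norm u" if "a \<in> A" for a u using LamI that unfolding lin_isometry_def by auto
  have iLam: "inner (Lam a u) (Lam a v) = inner u v" if "a \<in> A" for a u v
    using LamI that isom_inner by blast
  have ngam: "norm (gam Z) = norm Z" for Z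
  proof -
    obtain a where "a \<in> A" "Z = Lam a (gam Z)" using dec by blast
    then show ?thesis using nLam by metis
  qed
  have gamLip: "norm (gam Z - gam W) \<le> norm (Z - W)" for Z W
  proof -
    have "(norm (gam Z - gam W))^2 = (norm (gam Z))^2 + (norm (gam W))^2 - 2 * inner (gam Z) (gam W)"
      by (rule nsq_diff)
    also have "\<dots> \<le> (norm Z)^2 + (norm W)^2 - 2 * inner Z W" using ngam ineq by auto
    also have "\<dots> = (norm (Z - W))^2"
      by (rule nsq_diff[symmetric])
    finally show ?thesis by (rule power2_le_imp_le) simp
  qed
  define x0 where "x0 = gam X"
  obtain c where c: "phi x0 = ereal c"
    using dom proper unfolding edom_def proper_fun_def x0_def
    by (cases "phi (gam X)") auto
  obtain e where e: "e > 0" "\<And>Z. dist Z X < e \<Longrightarrow> phi x0 + ereal (Psi X) \<le> phi (gam Z) + ereal (Psi Z)"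
    using locmin unfolding local_minimizer_def x0_def by blast
  obtain D where D: "(Psi has_derivative D) (at X)" using diff by (auto simp: differentiable_def)
  have blD: "bounded_linear D" using D has_derivative_bounded_linear by blast
  define g where "g = (\<Sum>b\<in>Basis. D b *\<^sub>R b)"
  have Dg: "D h = inner h g" for h
  proof -
    have "D h = D (\<Sum>b\<in>Basis. (inner h b) *\<^sub>R b)" by (simp add: euclidean_representation)
    also have "\<dots> = (\<Sum>b\<in>Basis. (inner h b) * D b)"
      using blD by (simp add: linear_sum linear_scale bounded_linear.linear)
    also have "\<dots> = inner h g" unfolding g_def by (simp add: inner_sum_right mult.commute)
    finally show ?thesis .
  qed
  have gd: "(Psi has_derivative (\<lambda>h. inner h g)) (at X)"
    using D Dg by (metis (no_types) ext)
  have rem: "\<exists>d>0. \<forall>Z. norm (Z - X) < d \<longrightarrow> \<bar>Psi Z - Psi X - inner (Z - X) g\<bar> \<le> eps * norm (Z - X)"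
    if "eps > 0" for eps
    using gd that unfolding has_derivative_at_alt by (simp add: real_norm_def)
  have lminA: "phi x0 + ereal (Psi X) \<le> phi z + ereal (Psi (Lam a z))"
    if "a \<in> A" "X = Lam a x0" "norm (z - x0) < e" for a z
  proof -
    have "Lam a z - X = Lam a (z - x0)" using that lin by (simp add: linear_diff)
    then have "dist (Lam a z) X < e" using that nLam by (simp add: dist_norm)
    then show ?thesis using e(2) phiLam that by metis
  qed
  define t where "t = (\<lambda>n::nat. 1 / real (Suc n))"
  have tpos: "t n > 0" for n unfolding t_def by simp
  have tlim: "t \<longlonglongrightarrow> 0" unfolding t_def by (rule LIMSEQ_Suc[OF lim_const_over_n]) 
  define Xn where "Xn = (\<lambda>n. X - t n *\<^sub>R g)"
  have "\<forall>n. \<exists>a. a \<in> A \<and> Xn n = Lam a (gam (Xn n))" using dec by blast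
  then obtain an where an': "\<forall>n. an n \<in> A \<and> Xn n = Lam (an n) (gam (Xn n))" by metis
  then have an: "\<And>n. an n \<in> A" "\<And>n. Xn n = Lam (an n) (gam (Xn n))" by auto
  define w where "w = (\<lambda>n. (1 / t n) *\<^sub>R (x0 - gam (Xn n)))"
  have wb: "norm (w n) \<le> norm g" for n
  proof -
    have "norm (x0 - gam (Xn n)) \<le> norm (X - Xn n)" unfolding x0_def by (rule gamLip)
    also have "\<dots> = t n * norm g" using tpos[of n] by (simp add: Xn_def)
    moreover have "norm (w n) = norm (x0 - gam (Xn n)) / t n" using tpos[of n] unfolding w_def
      by (simp only: norm_scaleR) simp
    ultimately have "t n * norm (w n) \<le> t n * norm g" using tpos[of n] by (simp add: field_simps)
    then show ?thesis using tpos[of n] by simp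
  qed
  define d where "d = (\<lambda>n. Lam (an n) x0 - X)"
  have dv: "d n = t n *\<^sub>R (Lam (an n) (w n) - g)" for n
  proof -
    have "Lam (an n) (w n) = (1 / t n) *\<^sub>R (Lam (an n) x0 - Xn n)"
      using lin[OF an(1)[of n]] an(2)[of n] by (simp add: w_def linear_diff linear_scale)
    then have "t n *\<^sub>R Lam (an n) (w n) = Lam (an n) x0 - Xn n" using tpos[of n] by simp
    then show ?thesis by (simp add: d_def Xn_def scaleR_diff_right)
  qed
  have key: "t n * inner (d n) g \<le> - ((norm (d n))^2 / 2)" for n
  proof -
    let ?L = "Lam (an n)"
    have 1: "t n * inner (d n) g = inner (d n) (X - Xn n)" by (simp add: Xn_def)
    have 2: "inner (d n) (X - Xn n) = inner (?L x0) X - inner (?L x0) (Xn n) - inner X X + inner X (Xn n)"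
      by (simp add: d_def inner_diff_left inner_diff_right inner_commute)
    have 3: "inner (?L x0) (Xn n) = inner x0 (gam (Xn n))"
      using an(2)[of n] iLam[OF an(1)] by metis
    have 4: "inner x0 (gam (Xn n)) \<ge> inner X (Xn n)" using ineq x0_def by auto
    have 5: "(norm (d n))^2 = (norm (?L x0))^2 - 2 * inner (?L x0) X + (norm X)^2"
      unfolding d_def nsq_diff by simp
    have 6: "norm (?L x0) = norm X" using nLam[OF an(1)] ngam x0_def by simp
    have 7: "inner X X = (norm X)^2" by (simp add: power2_norm_eq_inner)
    have 8: "(norm (?L x0))^2 = (norm X)^2" using 6 by simp
    show ?thesis using 1 2 3 4 5 8 7 by linarith
  qed
  have dlim: "(\<lambda>n. (1 / t n) *\<^sub>R d n) \<longlonglongrightarrow> 0"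
    unfolding lim_sequentially
  proof (intro allI impI)
    fix r :: real assume r: "r > 0"
    obtain del where del: "del > 0" "\<And>Z. norm (Z - X) < del \<Longrightarrow> \<bar>Psi Z - Psi X - inner (Z - X) g\<bar> \<le> (r/4) * norm (Z - X)"
      using rem[of "r/4"] r by auto
    have "(\<lambda>n. 2 * norm g * t n) \<longlonglongrightarrow> 2 * norm g * 0"
      by (intro tendsto_mult tendsto_const tlim)
    then have "eventually (\<lambda>n. 2 * norm g * t n < min e del) sequentially"
      using e(1) del(1) by (intro order_tendstoD(2)) auto
    then obtain N where N: "\<And>n. n \<ge> N \<Longrightarrow> 2 * norm g * t n < min e del"
      unfolding eventually_sequentially by blast
    show "\<exists>no. \<forall>n\<ge>no. dist ((1 / t n) *\<^sub>R d n) 0 < r"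
    proof (intro exI allI impI)
      fix n assume n: "n \<ge> N"
      define nd where "nd = norm (d n)"
      have "norm (Lam (an n) (w n) - g) \<le> norm (Lam (an n) (w n)) + norm g" by (rule norm_triangle_ineq4)
      also have "\<dots> \<le> 2 * norm g" using nLam[OF an(1)] wb[of n] by simp
      finally have "nd \<le> t n * (2 * norm g)" unfolding nd_def dv using tpos[of n]
        by (simp add: mult_left_mono)
      then have ndb: "nd < e" "nd < del" using N[OF n] by (auto simp: algebra_simps)
      let ?Z = "Lam (an n) x0"
      have "phi x0 + ereal (Psi X) \<le> phi (gam ?Z) + ereal (Psi ?Z)"
        using e(2)[of ?Z] ndb by (simp add: dist_norm nd_def d_def)
      then have psi: "Psi X \<le> Psi ?Z" using phiLam[OF an(1)] c by simp
      have "\<bar>Psi ?Z - Psi X - inner (d n) g\<bar> \<le> (r/4) * nd"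
        using del(2)[of ?Z] ndb by (simp add: nd_def d_def)
      then have a: "0 \<le> inner (d n) g + (r/4) * nd" using psi by (simp only: abs_le_iff) linarith
      have b: "0 \<le> t n * inner (d n) g + t n * (r/4) * nd"
        using mult_nonneg_nonneg[OF less_imp_le[OF tpos[of n]] a] by (simp add: algebra_simps)
      have cc: "nd^2 \<le> t n * (r/2) * nd" using b key[of n] unfolding nd_def by linarith
      have dd: "nd \<le> t n * (r/2)"
      proof (cases "nd = 0")
        case True then show ?thesis using tpos[of n] r by simp
      next
        case False
        then have "nd > 0" unfolding nd_def by simp
        then show ?thesis using cc by (simp add: power2_eq_square)
      qed
      have "dist ((1 / t n) *\<^sub>R d n) 0 = nd / t n" using tpos[of n] by (simp add: nd_def)
      also have "\<dots> \<le> r/2" using dd tpos[of n] by (simp add: field_simps)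
      also have "\<dots> < r" using r by simp
      finally show "dist ((1 / t n) *\<^sub>R d n) 0 < r" .
    qed
  qed
  define K where "K = (\<lambda>a. Blinfun (Lam a)) ` A"
  have blL: "bounded_linear (Lam a)" if "a \<in> A" for a using lin[OF that] linear_conv_bounded_linear by blast
  have appK: "blinfun_apply (Blinfun (Lam a)) = Lam a" if "a \<in> A" for a
    using blL[OF that] by (rule bounded_linear_Blinfun_apply)
  have "bounded K" unfolding bounded_iff K_def
  proof (intro exI ballI)
    fix B assume "B \<in> (\<lambda>a. Blinfun (Lam a)) ` A"
    then obtain a where a: "a \<in> A" "B = Blinfun (Lam a)" by blast
    show "norm B \<le> 1" unfolding a(2) by (rule norm_blinfun_bound) (auto simp: appK[OF a(1)] nLam[OF a(1)])
  qed
  then have "compact K" using closedLam K_def compact_eq_bounded_closed by blast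
  have cS: "compact (K \<times> cball (0::'x) (norm g))" using compact_Times[OF \<open>compact K\<close> compact_cball[of "0::'x" "norm g"]] by simp
  define f where "f = (\<lambda>n. (Blinfun (Lam (an n)), w n))"
  have "\<forall>n. f n \<in> K \<times> cball (0::'x) (norm g)" using an(1) wb by (auto simp: f_def K_def)
  then obtain l r where lr: "l \<in> K \<times> cball (0::'x) (norm g)" "strict_mono r" "(f \<circ> r) \<longlonglongrightarrow> l"
    using seq_compactE[OF compact_imp_seq_compact[OF cS]] by metis
  obtain B w0 where l: "l = (B, w0)" by (cases l)
  then obtain a where a: "a \<in> A" "B = Blinfun (Lam a)" using lr(1) K_def by auto
  have fstc: "(\<lambda>n. Blinfun (Lam (an (r n)))) \<longlonglongrightarrow> B"
    using tendsto_fst[OF lr(3)] by (simp add: l f_def o_def)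
  have sndc: "(\<lambda>n. w (r n)) \<longlonglongrightarrow> w0"
    using tendsto_snd[OF lr(3)] by (simp add: l f_def o_def)
  have c1: "(\<lambda>n. Lam (an (r n)) (w (r n))) \<longlonglongrightarrow> Lam a w0"
    using blinfun.tendsto[OF fstc sndc] by (simp add: a appK an(1))
  have "(\<lambda>n. Lam (an n) (w n) - g) \<longlonglongrightarrow> 0"
  proof -
    have "(1 / t n) *\<^sub>R d n = Lam (an n) (w n) - g" for n using tpos[of n] by (simp add: dv)
    then show ?thesis using dlim by simp
  qed
  from LIMSEQ_subseq_LIMSEQ[OF this lr(2)]
  have "(\<lambda>n. Lam (an (r n)) (w (r n)) - g + g) \<longlonglongrightarrow> 0 + g"
    by (intro tendsto_add tendsto_const) (simp add: o_def)
  then have "(\<lambda>n. Lam (an (r n)) (w (r n))) \<longlonglongrightarrow> g" by simp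
  then have gw: "g = Lam a w0" using c1 LIMSEQ_unique by blast
  have c3: "(\<lambda>n. Lam (an (r n)) x0) \<longlonglongrightarrow> Lam a x0"
    using blinfun.tendsto[OF fstc tendsto_const[of x0]] by (simp add: a appK an(1))
  have "(\<lambda>n. t n *\<^sub>R ((1 / t n) *\<^sub>R d n)) \<longlonglongrightarrow> 0 *\<^sub>R 0"
    by (intro tendsto_scaleR tlim dlim)
  moreover have "(\<lambda>n. t n *\<^sub>R ((1 / t n) *\<^sub>R d n)) = d" using tpos by (auto intro!: ext simp: less_imp_neq[symmetric])
  ultimately have "d \<longlonglongrightarrow> 0" by simp
  then have "(\<lambda>n. d n + X) \<longlonglongrightarrow> 0 + X" by (intro tendsto_add tendsto_const)
  then have "(\<lambda>n. Lam (an n) x0) \<longlonglongrightarrow> X" by (simp add: d_def)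
  from LIMSEQ_subseq_LIMSEQ[OF this lr(2)]
  have "(\<lambda>n. Lam (an (r n)) x0) \<longlonglongrightarrow> X" by (simp add: o_def)
  then have Xa: "X = Lam a x0" using c3 LIMSEQ_unique by blast
  have subd: "- w0 \<in> frechet_subdiff phi x0"
    unfolding frechet_subdiff_def
  proof (intro CollectI conjI)
    show "\<bar>phi x0\<bar> \<noteq> \<infinity>" using c by simp
    show "0 \<le> Liminf (at x0) (\<lambda>z. (phi z - phi x0 - ereal (inner (z - x0) (- w0))) / ereal (norm (z - x0)))"
      unfolding le_Liminf_iff
    proof (intro allI impI)
      fix yy :: ereal assume yy: "yy < 0"
      obtain eps where eps: "eps > 0" "yy < ereal (- eps)"
      proof (cases yy)
        case (real q) then show ?thesis using that[of "-q/2"] yy by auto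
      next
        case PInf then show ?thesis using yy by simp
      next
        case MInf then show ?thesis using that[of 1] by simp
      qed
      obtain del where del: "del > 0" "\<And>Z. norm (Z - X) < del \<Longrightarrow> \<bar>Psi Z - Psi X - inner (Z - X) g\<bar> \<le> eps * norm (Z - X)"
        using rem[OF eps(1)] by auto
      show "eventually (\<lambda>z. yy < (phi z - phi x0 - ereal (inner (z - x0) (- w0))) / ereal (norm (z - x0))) (at x0)"
        unfolding eventually_at
      proof (intro exI[of _ "min e del"] conjI ballI impI)
        show "min e del > 0" using e(1) del(1) by simp
        fix z assume z: "z \<in> UNIV" "z \<noteq> x0 \<and> dist z x0 < min e del"
        let ?Z = "Lam a z"
        have "?Z - X = Lam a (z - x0)" using Xa lin[OF a(1)] by (simp add: linear_diff)
        then have nz: "norm (?Z - X) = norm (z - x0)" and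
          ip0: "inner (z - x0) w0 = inner (?Z - X) g"
          using nLam[OF a(1)] iLam[OF a(1)] gw by auto
        have np: "norm (z - x0) > 0" using z by simp
        have lm: "phi x0 + ereal (Psi X) \<le> phi z + ereal (Psi ?Z)"
          using lminA[OF a(1) Xa, of z] z by (simp add: dist_norm)
        have rr: "\<bar>Psi ?Z - Psi X - inner (?Z - X) g\<bar> \<le> eps * norm (z - x0)"
          using del(2)[of ?Z] nz z by (simp add: dist_norm)
        show "yy < (phi z - phi x0 - ereal (inner (z - x0) (- w0))) / ereal (norm (z - x0))"
        proof (cases "phi z")
          case PInf then show ?thesis using c np yy by (auto simp: less_le)
        next
          case MInf then show ?thesis using proper unfolding proper_fun_def by simp
        next
          case (real p)
          have "c + Psi X \<le> p + Psi ?Z" using lm real c by simp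
          then have q: "- eps * norm (z - x0) \<le> p - c + inner (z - x0) w0"
            using rr ip0 by (simp only: abs_le_iff) linarith
          have "(phi z - phi x0 - ereal (inner (z - x0) (- w0))) / ereal (norm (z - x0))
                = ereal ((p - c + inner (z - x0) w0) / norm (z - x0))"
            using real c np by simp
          moreover have "- eps \<le> (p - c + inner (z - x0) w0) / norm (z - x0)"
            using q np by (simp add: field_simps)
          ultimately show ?thesis using eps(2) by (metis ereal_less_eq(3) order_less_le_trans)
        qed
      qed
    qed
  qed
  have "GDERIV Psi X :> - Lam a (- w0)"
    using gd gw lin[OF a(1)] unfolding gderiv_def by (simp add: linear_neg)
  then show ?thesis using subd a(1) Xa unfolding A_of_def x0_def by blast
qed
end
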